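(* Let $V=\{1,\dots,n\}$, let $(\bar\Omega,\mathcal F,\mathbb P)$ be a probability space, and let $\sigma:\{0,1\}^n\times\bar\Omega\to\mathbb R$ be such that for every $\omega$ the function $x\mapsto\sigma(x,\omega)$ on $\{0,1\}^n$ (viewed as a set function on $V$) is nondecreasing and submodular, and each $\sigma(x)$ is integrable. Let $\mathcal X\subseteq\{0,1\}^n$ be nonempty and $\alpha\in(0,1]$. Consider the following delayed constraint generation algorithm for $\max_{x\in\mathcal X}\mathrm{CVaR}_\alpha(\sigma(x))$, with tolerance $\epsilon=0$: start with a finite set $\mathcal C$ of optimality cuts, $\mathrm{UB}=\infty$, $\mathrm{LB}=-\infty$; while $\mathrm{UB}-\mathrm{LB}>\epsilon$: solve the relaxed master problem $\max\{\psi:(x,\psi)\text{ satisfies all cuts in }\mathcal C,\ x\in\mathcal X,\ \psi\in\mathbb R\}$ to optimality, obtaining $(\bar\psi,\bar x)$; set $\mathrm{UB}=\bar\psi$ and $\mathrm{LB}=\mathrm{CVaR}_\alpha(\sigma(\bar x))$; add to $\mathcal C$ the cut (A) and/or the cut (B) generated at $\bar x$, where, with $\bar X$ the support of $\bar x$, (A): $\psi\le\mathrm{CVaR}_\alpha(\sigma(\bar x))+\sum_{j\in V\setminus\bar X}(\mathrm{CVaR}_1(\sigma(\bar x+\mathbf e_j))-\mathrm{CVaR}_\alpha(\sigma(\bar x)))x_j$; (B): $\psi\le\mathrm{CVaR}_\alpha(\sigma(\bar x))+\sum_{i=1}^r\bar\delta_{j_i}(\bar x)x_{j_i}$, for some ordering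 $j_1,\dots,j_r$ of $V\setminus\bar X$, $\bar\delta_{j_i}(\bar x)=\mathrm{CVaR}_\alpha(\sigma(\mathbf 1-\sum_{l=i+1}^r\mathbf e_{j_l}))-\mathrm{CVaR}_\alpha(\sigma(\bar x))$; upon termination output $\bar x$. Then this algorithm terminates after finitely many iterations and outputs an optimal solution of $\max_{x\in\mathcal X}\mathrm{CVaR}_\alpha(\sigma(x))$.
   Context: $\mathrm{CVaR}_\alpha(Y)=\max_{\eta\in\mathbb R}\{\eta-\frac1\alpha\mathbb E([\eta-Y]_+)\}$ for integrable $Y$ and $\alpha\in(0,1]$, with $[z]_+=\max(z,0)$. $\mathbf e_j$ is the $j$-th unit vector and $\mathbf 1$ the all-ones vector in $\mathbb R^n$. It is assumed that $\mathrm{CVaR}_\alpha(\sigma(x))$ can be evaluated exactly for any given $x$ (a CVaR oracle), and that each relaxed master problem is solved to optimality. *)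

theory Defs
  imports "HOL-Probability.Probability"
begin

text \<open>Points of the ground set V are the elements of the finite index type 'n
  (so n = CARD('n)); vectors in R^n are elements of real^'n.\<close>

definition binvecs :: "(real^'n) set" where
  "binvecs = {x. \<forall>i. x $ i = 0 \<or> x $ i = 1}"

definition indvec :: "'n set \<Rightarrow> real^'n" where
  "indvec S = (\<chi> i. if i \<in> S then 1 else 0)"

definition supp :: "real^'n \<Rightarrow> 'n set" where
  "supp x = {j. x $ j \<noteq> 0}"

definition unitv :: "'n \<Rightarrow> real^'n" where
  "unitv j = axis j 1"

definition onesv :: "real^'n" where
  "onesv = (\<chi> i. 1)"

definition nondecr_setfun :: "('n set \<Rightarrow> real) \<Rightarrow> bool" where
  "nondecr_setfun f \<longleftrightarrow> (\<forall>S T. S \<subseteq> T \<longrightarrow> f S \<le> f T)"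

definition submodular_setfun :: "('n set \<Rightarrow> real) \<Rightarrow> bool" where
  "submodular_setfun f \<longleftrightarrow> (\<forall>S T. f (S \<union> T) + f (S \<inter> T) \<le> f S + f T)"

text \<open>CVaR_alpha(Y) = max over eta of eta - (1/alpha) E[(eta - Y)_+]; the maximum is
  attained, so it equals the supremum.\<close>
definition cvar :: "'a measure \<Rightarrow> real \<Rightarrow> ('a \<Rightarrow> real) \<Rightarrow> real" where
  "cvar M \<alpha> Y = (SUP \<eta>::real. \<eta> - (1 / \<alpha>) * integral\<^sup>L M (\<lambda>\<omega>. max (\<eta> - Y \<omega>) 0))"

text \<open>A cut (a, b) stands for the linear inequality  psi \<le> a + sum_j b_j x_j.\<close>
type_synonym 'n cut = "real \<times> (real^'n)"

definition sat_cut :: "'n cut \<Rightarrow> real^'n \<Rightarrow> real \<Rightarrow> bool" where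
  "sat_cut c x \<psi> \<longleftrightarrow> \<psi> \<le> fst c + (\<Sum>j\<in>UNIV. snd c $ j * x $ j)"

definition optimality_cut ::
  "'a measure \<Rightarrow> (real^'n \<Rightarrow> 'a \<Rightarrow> real) \<Rightarrow> real \<Rightarrow> (real^'n) set \<Rightarrow> 'n cut \<Rightarrow> bool" where
  "optimality_cut M \<sigma> \<alpha> X c \<longleftrightarrow> (\<forall>x\<in>X. sat_cut c x (cvar M \<alpha> (\<sigma> x)))"

definition cutA ::
  "'a measure \<Rightarrow> (real^'n \<Rightarrow> 'a \<Rightarrow> real) \<Rightarrow> real \<Rightarrow> real^'n \<Rightarrow> 'n cut" where
  "cutA M \<sigma> \<alpha> xb =
     (cvar M \<alpha> (\<sigma> xb),
      \<chi> j. if j \<notin> supp xb then cvar M 1 (\<sigma> (xb + unitv j)) - cvar M \<alpha> (\<sigma> xb) else 0)"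

text \<open>Cut (B) generated at xb for an ordering js = [j_1,...,j_r] of V - supp xb
  (0-based list indices: delta of js!i uses the elements js!l with i < l < r).\<close>
definition cutB ::
  "'a measure \<Rightarrow> (real^'n \<Rightarrow> 'a \<Rightarrow> real) \<Rightarrow> real \<Rightarrow> real^'n \<Rightarrow> 'n list \<Rightarrow> 'n cut" where
  "cutB M \<sigma> \<alpha> xb js =
     (cvar M \<alpha> (\<sigma> xb),
      \<chi> j. (\<Sum>i<length js. if js ! i = j then
               cvar M \<alpha> (\<sigma> (onesv - (\<Sum>l\<in>{Suc i..<length js}. unitv (js ! l))))
                 - cvar M \<alpha> (\<sigma> xb)
             else 0))"

definition ordering_of :: "'n list \<Rightarrow> 'n set \<Rightarrow> bool" where
  "ordering_of js A \<longleftrightarrow> distinct js \<and> set js = A"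

definition master_opt :: "(real^'n) set \<Rightarrow> 'n cut set \<Rightarrow> real^'n \<Rightarrow> real \<Rightarrow> bool" where
  "master_opt X C x \<psi> \<longleftrightarrow>
     (x \<in> X \<and> (\<forall>c\<in>C. sat_cut c x \<psi>)) \<and>
     (\<forall>x' \<psi>'. x' \<in> X \<and> (\<forall>c\<in>C. sat_cut c x' \<psi>') \<longrightarrow> \<psi>' \<le> \<psi>)"

text \<open>A (possibly infinite) run of the delayed constraint generation algorithm with
  tolerance 0: iteration k (k = 0,1,...) is executed iff UB - LB > 0 after all earlier
  iterations; in it, (psis k, xs k) is an optimal master solution for cut set Cs k,
  UB = psis k, LB = CVaR_alpha(sigma(xs k)), and cut (A) and/or cut (B) generated at
  xs k is added, giving Cs (Suc k).\<close>
definition dcg_run ::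
  "'a measure \<Rightarrow> (real^'n \<Rightarrow> 'a \<Rightarrow> real) \<Rightarrow> real \<Rightarrow> (real^'n) set \<Rightarrow> 'n cut set \<Rightarrow>
   (nat \<Rightarrow> real^'n) \<Rightarrow> (nat \<Rightarrow> real) \<Rightarrow> (nat \<Rightarrow> 'n cut set) \<Rightarrow> bool" where
  "dcg_run M \<sigma> \<alpha> X C0 xs psis Cs \<longleftrightarrow>
     Cs 0 = C0 \<and>
     (\<forall>k. (\<forall>i<k. psis i - cvar M \<alpha> (\<sigma> (xs i)) > 0) \<longrightarrow>
        master_opt X (Cs k) (xs k) (psis k) \<and>
        (Cs (Suc k) = Cs k \<union> {cutA M \<sigma> \<alpha> (xs k)} \<or>
         (\<exists>js. ordering_of js (UNIV - supp (xs k)) \<and>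
            (Cs (Suc k) = Cs k \<union> {cutB M \<sigma> \<alpha> (xs k) js} \<or>
             Cs (Suc k) = Cs k \<union> {cutA M \<sigma> \<alpha> (xs k), cutB M \<sigma> \<alpha> (xs k) js}))))"

end

theory Submission
  imports Defs
begin


lemma int_const_P: "prob_space M \<Longrightarrow> integral\<^sup>L M (\<lambda>x. c::real) = c"
  by (simp add: prob_space.prob_space)

lemma int_max_P:
  fixes Y :: "'a \<Rightarrow> real"
  assumes P: "prob_space M" and Y: "integrable M Y"
  shows "integrable M (\<lambda>\<omega>. max (\<eta> - Y \<omega>) (0::real))"
proof -
  interpret prob_space M by fact
  show ?thesis using Y integrable_const by (intro integrable_max integrable_diff) auto
qed

lemma int_diffc_P:
  fixes Y :: "'a \<Rightarrow> real" and c :: real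
  assumes P: "prob_space M" and Y: "integrable M Y"
  shows "integrable M (\<lambda>\<omega>. c - Y \<omega>)"
proof -
  interpret prob_space M by fact
  show ?thesis by (rule Bochner_Integration.integrable_diff[OF integrable_const Y])
qed

lemma int_diff_P:
  fixes Y :: "'a \<Rightarrow> real" and c :: real
  assumes P: "prob_space M" and Y: "integrable M Y"
  shows "integral\<^sup>L M (\<lambda>\<omega>. c - Y \<omega>) = c - integral\<^sup>L M Y"
proof -
  interpret prob_space M by fact
  have "integral\<^sup>L M (\<lambda>\<omega>. c - Y \<omega>) = integral\<^sup>L M (\<lambda>\<omega>. c) - integral\<^sup>L M Y"
    by (rule Bochner_Integration.integral_diff[OF integrable_const Y])
  then show ?thesis by (simp add: prob_space)
qed

lemma cvar_term_le:
  fixes Y :: "'a \<Rightarrow> real" and \<alpha> \<eta> :: real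
  assumes P: "prob_space M" and Y: "integrable M Y" and a: "0 < \<alpha>" "\<alpha> \<le> 1"
  shows "\<eta> - (1 / \<alpha>) * integral\<^sup>L M (\<lambda>\<omega>. max (\<eta> - Y \<omega>) 0) \<le> integral\<^sup>L M Y"
proof -
  let ?E = "integral\<^sup>L M (\<lambda>\<omega>. max (\<eta> - Y \<omega>) 0)"
  have i1: "integrable M (\<lambda>\<omega>. max (\<eta> - Y \<omega>) 0)" using int_max_P[OF P Y] .
  have "?E \<ge> 0" by (rule integral_nonneg_AE) auto
  have "integral\<^sup>L M (\<lambda>\<omega>. \<eta> - Y \<omega>) \<le> ?E"
  proof (rule integral_mono)
    show "integrable M (\<lambda>\<omega>. \<eta> - Y \<omega>)" by (rule int_diffc_P[OF P Y])
  qed (rule i1, simp)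
  moreover have "integral\<^sup>L M (\<lambda>\<omega>. \<eta> - Y \<omega>) = \<eta> - integral\<^sup>L M Y"
    using int_diff_P[OF P Y] .
  ultimately have E1: "\<eta> - integral\<^sup>L M Y \<le> ?E" by simp
  have ia: "1 / \<alpha> \<ge> 1" using a by simp
  show ?thesis
  proof (cases "\<eta> \<le> integral\<^sup>L M Y")
    case True
    have "0 \<le> (1/\<alpha>) * ?E" using \<open>?E \<ge> 0\<close> a by simp
    then show ?thesis using True by linarith
  next
    case False
    have "?E \<le> (1/\<alpha>) * ?E" using \<open>?E \<ge> 0\<close> ia mult_right_mono[OF ia \<open>?E \<ge> 0\<close>] by simp
    then show ?thesis using E1 by linarith
  qed
qed

lemma cvar_bdd:
  fixes Y :: "'a \<Rightarrow> real" and \<alpha> :: real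
  assumes "prob_space M" "integrable M Y" "0 < \<alpha>" "\<alpha> \<le> 1"
  shows "bdd_above (range (\<lambda>\<eta>. \<eta> - (1 / \<alpha>) * integral\<^sup>L M (\<lambda>\<omega>. max (\<eta> - Y \<omega>) 0)))"
  using cvar_term_le[OF assms] by (intro bdd_aboveI2) 

lemma cvar_le_exp:
  fixes Y :: "'a \<Rightarrow> real" and \<alpha> :: real
  assumes "prob_space M" "integrable M Y" "0 < \<alpha>" "\<alpha> \<le> 1"
  shows "cvar M \<alpha> Y \<le> integral\<^sup>L M Y"
  unfolding cvar_def using cvar_term_le[OF assms] by (intro cSUP_least) auto

lemma cvar_mono:
  fixes Y Z :: "'a \<Rightarrow> real" and \<alpha> :: real
  assumes P: "prob_space M" and Y: "integrable M Y" and Z: "integrable M Z" and a: "0 < \<alpha>" "\<alpha> \<le> 1"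
    and le: "\<And>\<omega>. \<omega> \<in> space M \<Longrightarrow> Y \<omega> \<le> Z \<omega>"
  shows "cvar M \<alpha> Y \<le> cvar M \<alpha> Z"
  unfolding cvar_def
proof (rule cSUP_mono)
  show "bdd_above (range (\<lambda>\<eta>. \<eta> - (1 / \<alpha>) * integral\<^sup>L M (\<lambda>\<omega>. max (\<eta> - Z \<omega>) 0)))"
    by (rule cvar_bdd[OF P Z a])
  fix \<eta> :: real
  have "integral\<^sup>L M (\<lambda>\<omega>. max (\<eta> - Z \<omega>) 0) \<le> integral\<^sup>L M (\<lambda>\<omega>. max (\<eta> - Y \<omega>) 0)"
  proof (rule integral_mono)
    fix x assume "x \<in> space M"
    then have "Y x \<le> Z x" by (rule le)
    then show "max (\<eta> - Z x) 0 \<le> max (\<eta> - Y x) 0" by linarith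
  qed (rule int_max_P[OF P Z], rule int_max_P[OF P Y])
  then have "(1/\<alpha>) * integral\<^sup>L M (\<lambda>\<omega>. max (\<eta> - Z \<omega>) 0) \<le> (1/\<alpha>) * integral\<^sup>L M (\<lambda>\<omega>. max (\<eta> - Y \<omega>) 0)"
    using a by (intro mult_left_mono) auto
  then show "\<exists>m\<in>UNIV. \<eta> - 1 / \<alpha> * integral\<^sup>L M (\<lambda>\<omega>. max (\<eta> - Y \<omega>) 0)
                 \<le> m - 1 / \<alpha> * integral\<^sup>L M (\<lambda>\<omega>. max (m - Z \<omega>) 0)"
    by (intro bexI[of _ \<eta>]) auto
qed auto

lemma cvar1_eq:
  fixes Y :: "'a \<Rightarrow> real"
  assumes P: "prob_space M" and Y: "integrable M Y"
  shows "cvar M 1 Y = integral\<^sup>L M Y"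
proof (rule antisym)
  show "cvar M 1 Y \<le> integral\<^sup>L M Y" by (rule cvar_le_exp[OF P Y]) auto
  define s where "s n \<omega> = min (Y \<omega>) (real n)" for n \<omega>
  have Ym[measurable]: "Y \<in> borel_measurable M" using Y by auto
  have lim: "(\<lambda>n. integral\<^sup>L M (s n)) \<longlonglongrightarrow> integral\<^sup>L M Y"
  proof (rule integral_dominated_convergence[where w="\<lambda>\<omega>. \<bar>Y \<omega>\<bar>"])
    show "\<And>i. s i \<in> borel_measurable M" unfolding s_def by measurable
    show "integrable M (\<lambda>\<omega>. \<bar>Y \<omega>\<bar>)" using Y by auto
    show "AE x in M. (\<lambda>i. s i x) \<longlonglongrightarrow> Y x"
    proof (rule AE_I2)
      fix x
      obtain N :: nat where "Y x \<le> real N" using real_arch_simple by blast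
      then have "\<forall>n\<ge>N. s n x = Y x" unfolding s_def
        by (metis min.absorb1 of_nat_le_iff order_trans)
      then show "(\<lambda>i. s i x) \<longlonglongrightarrow> Y x"
        by (intro tendsto_eventually) (auto simp: eventually_sequentially)
    qed
    show "\<And>i. AE x in M. norm (s i x) \<le> \<bar>Y x\<bar>"
      by (auto simp: s_def)
  qed (use Ym in auto)
  show "integral\<^sup>L M Y \<le> cvar M 1 Y"
  proof (rule LIMSEQ_le_const2[OF lim], intro exI allI impI)
    fix n :: nat
    have "s n = (\<lambda>\<omega>. real n - max (real n - Y \<omega>) 0)" unfolding s_def by (auto simp: fun_eq_iff)
    then have "integral\<^sup>L M (s n) = real n - integral\<^sup>L M (\<lambda>\<omega>. max (real n - Y \<omega>) 0)"
      using int_diff_P[OF P int_max_P[OF P Y]] by simp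
    also have "\<dots> \<le> cvar M 1 Y" unfolding cvar_def
      using cSUP_upper[OF UNIV_I cvar_bdd[OF P Y, of 1]] by simp
    finally show "integral\<^sup>L M (s n) \<le> cvar M 1 Y" .
  qed
qed

lemma cvar_le_cvar1:
  fixes Y :: "'a \<Rightarrow> real" and \<alpha> :: real
  assumes P: "prob_space M" and Y: "integrable M Y" and a: "0 < \<alpha>" "\<alpha> \<le> 1"
  shows "cvar M \<alpha> Y \<le> cvar M 1 Y"
  using cvar_le_exp[OF assms] cvar1_eq[OF P Y] by simp



lemma indvec_nth[simp]: "indvec S $ i = (if i \<in> S then 1 else 0)"
  by (simp add: indvec_def)

lemma unitv_nth[simp]: "unitv j $ i = (if i = j then 1 else 0)"
  by (simp add: unitv_def axis_def)

lemma indvec_bin: "indvec S \<in> binvecs"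
  by (simp add: binvecs_def)

lemma bin_indvec: "x \<in> binvecs \<Longrightarrow> x = indvec (supp x)"
  by (auto simp: binvecs_def supp_def vec_eq_iff)

lemma finite_binvecs: "finite (binvecs :: (real^'n) set)"
proof -
  have "binvecs \<subseteq> range (indvec :: 'n set \<Rightarrow> real^'n)"
    using bin_indvec by blast
  then show ?thesis by (rule finite_subset) simp
qed

lemma add_unitv: "x \<in> binvecs \<Longrightarrow> j \<notin> supp x \<Longrightarrow> x + unitv j = indvec (supp x \<union> {j})"
  by (auto simp: binvecs_def supp_def vec_eq_iff)

lemma sum_unitv_nth:
  assumes "distinct js" "A \<subseteq> {..<length js}"
  shows "(\<Sum>l\<in>A. unitv (js ! l)) $ k = (if k \<in> (\<lambda>l. js ! l) ` A then 1 else (0::real))"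
proof -
  have fA: "finite A" using assms(2) finite_subset by blast
  have "(\<Sum>l\<in>A. unitv (js ! l)) $ k = (\<Sum>l\<in>A. (if k = js ! l then 1 else 0::real))"
    by (simp add: sum_component)
  also have "\<dots> = (if k \<in> (\<lambda>l. js ! l) ` A then 1 else 0)"
  proof (cases "k \<in> (\<lambda>l. js ! l) ` A")
    case True
    then obtain l0 where l0: "l0 \<in> A" "k = js ! l0" by blast
    have "(\<Sum>l\<in>A. (if k = js ! l then 1 else 0::real)) = (\<Sum>l\<in>A. (if l = l0 then 1 else 0))"
    proof (rule sum.cong)
      fix l assume "l \<in> A"
      then show "(if k = js ! l then 1 else 0::real) = (if l = l0 then 1 else 0)"
        using l0 assms nth_eq_iff_index_eq[OF assms(1)] by auto
    qed simp
    also have "\<dots> = 1" using fA l0 by simp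
    finally show ?thesis using True by simp
  next
    case False
    then show ?thesis by (auto intro!: sum.neutral)
  qed
  finally show ?thesis .
qed

lemma ones_minus:
  assumes "distinct js" "A \<subseteq> {..<length js}"
  shows "onesv - (\<Sum>l\<in>A. unitv (js ! l)) = indvec (UNIV - (\<lambda>l. js ! l) ` A)"
  unfolding vec_eq_iff using sum_unitv_nth[OF assms] by (auto simp: onesv_def)

lemma submod_chain:
  assumes sm: "submodular_setfun f" and fin: "finite J"
  shows "B \<inter> J = {} \<Longrightarrow> f (B \<union> J) \<le> f B + (\<Sum>j\<in>J. f (B \<union> {j}) - f B)"
  using fin
proof (induction J rule: finite_induct)
  case empty
  then show ?case by simp
next
  case (insert j J)
  have "f ((B \<union> J) \<union> (B \<union> {j})) + f ((B \<union> J) \<inter> (B \<union> {j})) \<le> f (B \<union> J) + f (B \<union> {j})"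
    using sm unfolding submodular_setfun_def by blast
  moreover have "(B \<union> J) \<union> (B \<union> {j}) = B \<union> insert j J" by auto
  moreover have "(B \<union> J) \<inter> (B \<union> {j}) = B" using insert by auto
  ultimately have "f (B \<union> insert j J) \<le> f (B \<union> J) + f (B \<union> {j}) - f B" by simp
  then show ?case using insert by simp
qed



context
  fixes M :: "'a measure" and \<sigma> :: "real^'n \<Rightarrow> 'a \<Rightarrow> real" and \<alpha> :: real
  assumes P: "prob_space M"
    and nd: "\<And>\<omega>. \<omega> \<in> space M \<Longrightarrow> nondecr_setfun (\<lambda>S. \<sigma> (indvec S) \<omega>)"
    and sm: "\<And>\<omega>. \<omega> \<in> space M \<Longrightarrow> submodular_setfun (\<lambda>S. \<sigma> (indvec S) \<omega>)"
    and int: "\<And>x. x \<in> binvecs \<Longrightarrow> integrable M (\<sigma> x)"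
    and a: "0 < \<alpha>" "\<alpha> \<le> 1"
begin

lemma intS: "integrable M (\<sigma> (indvec S))"
  by (rule int[OF indvec_bin])

lemma cmono: "S \<subseteq> T \<Longrightarrow> cvar M \<alpha> (\<sigma> (indvec S)) \<le> cvar M \<alpha> (\<sigma> (indvec T))"
  by (rule cvar_mono[OF P intS intS a]) (use nd in \<open>auto simp: nondecr_setfun_def\<close>)

lemma exp_chain:
  assumes "finite J" "B \<inter> J = {}"
  shows "integral\<^sup>L M (\<sigma> (indvec (B \<union> J))) \<le> integral\<^sup>L M (\<sigma> (indvec B))
          + (\<Sum>j\<in>J. integral\<^sup>L M (\<sigma> (indvec (B \<union> {j}))) - integral\<^sup>L M (\<sigma> (indvec B)))"
proof -
  have "integral\<^sup>L M (\<sigma> (indvec (B \<union> J))) \<le>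
        integral\<^sup>L M (\<lambda>\<omega>. \<sigma> (indvec B) \<omega> + (\<Sum>j\<in>J. \<sigma> (indvec (B \<union> {j})) \<omega> - \<sigma> (indvec B) \<omega>))"
  proof (rule integral_mono)
    show "integrable M (\<lambda>\<omega>. \<sigma> (indvec B) \<omega> + (\<Sum>j\<in>J. \<sigma> (indvec (B \<union> {j})) \<omega> - \<sigma> (indvec B) \<omega>))"
      by (intro Bochner_Integration.integrable_add Bochner_Integration.integrable_sum
            Bochner_Integration.integrable_diff intS)
    fix \<omega> assume "\<omega> \<in> space M"
    from submod_chain[OF sm[OF this] assms(1), of B] assms(2)
    show "\<sigma> (indvec (B \<union> J)) \<omega> \<le> \<sigma> (indvec B) \<omega> + (\<Sum>j\<in>J. \<sigma> (indvec (B \<union> {j})) \<omega> - \<sigma> (indvec B) \<omega>)"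
      by simp
  qed (rule intS)
  also have "\<dots> = integral\<^sup>L M (\<sigma> (indvec B))
          + (\<Sum>j\<in>J. integral\<^sup>L M (\<sigma> (indvec (B \<union> {j}))) - integral\<^sup>L M (\<sigma> (indvec B)))"
    by (simp add: Bochner_Integration.integral_add Bochner_Integration.integral_sum
          Bochner_Integration.integrable_sum Bochner_Integration.integral_diff
          Bochner_Integration.integrable_diff intS)
  finally show ?thesis .
qed

lemma cutA_valid:
  assumes xb: "xb \<in> binvecs" and x: "x \<in> binvecs"
  shows "sat_cut (cutA M \<sigma> \<alpha> xb) x (cvar M \<alpha> (\<sigma> x))"
proof -
  define B where "B = supp xb"
  define S where "S = supp x"
  define J where "J = S - B"
  define c where "c = cvar M \<alpha> (\<sigma> xb)"
  define d where "d j = cvar M 1 (\<sigma> (xb + unitv j)) - c" for j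
  have xbB: "xb = indvec B" unfolding B_def by (rule bin_indvec[OF xb])
  have xS: "x = indvec S" unfolding S_def by (rule bin_indvec[OF x])
  have "(\<Sum>j\<in>UNIV. snd (cutA M \<sigma> \<alpha> xb) $ j * x $ j) = (\<Sum>j\<in>UNIV. if j \<in> J then d j else 0)"
    by (intro sum.cong) (auto simp: cutA_def xS J_def B_def d_def c_def)
  also have "\<dots> = (\<Sum>j\<in>J. d j)"
    by (simp add: sum.If_cases)
  finally have sumeq: "(\<Sum>j\<in>UNIV. snd (cutA M \<sigma> \<alpha> xb) $ j * x $ j) = (\<Sum>j\<in>J. d j)" .
  have fJ: "finite J" by simp
  have BJ: "B \<inter> J = {}" by (auto simp: J_def)
  have c1: "cvar M \<alpha> (\<sigma> x) \<le> cvar M \<alpha> (\<sigma> (indvec (B \<union> J)))"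
    unfolding xS by (rule cmono) (auto simp: J_def)
  have "cvar M \<alpha> (\<sigma> x) \<le> c + (\<Sum>j\<in>J. d j)"
  proof (cases "J = {}")
    case True
    then show ?thesis using c1 by (simp add: c_def xbB)
  next
    case False
    let ?E = "\<lambda>S. integral\<^sup>L M (\<sigma> (indvec S))"
    have "cvar M \<alpha> (\<sigma> (indvec (B \<union> J))) \<le> ?E (B \<union> J)"
      by (rule cvar_le_exp[OF P intS a])
    also have "\<dots> \<le> ?E B + (\<Sum>j\<in>J. ?E (B \<union> {j}) - ?E B)"
      by (rule exp_chain[OF fJ BJ])
    also have "(\<Sum>j\<in>J. ?E (B \<union> {j}) - ?E B) = (\<Sum>j\<in>J. d j) + real (card J) * (c - ?E B)"
    proof -
      have "\<And>j. j \<in> J \<Longrightarrow> ?E (B \<union> {j}) = cvar M 1 (\<sigma> (xb + unitv j))"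
      proof -
        fix j assume "j \<in> J"
        then have "j \<notin> supp xb" by (auto simp: J_def B_def)
        then have "xb + unitv j = indvec (B \<union> {j})" using add_unitv[OF xb] B_def by simp
        then show "?E (B \<union> {j}) = cvar M 1 (\<sigma> (xb + unitv j))"
          using cvar1_eq[OF P intS] by simp
      qed
      then have "(\<Sum>j\<in>J. ?E (B \<union> {j}) - ?E B) = (\<Sum>j\<in>J. d j + (c - ?E B))"
        by (intro sum.cong) (auto simp: d_def)
      then show ?thesis by (simp add: sum.distrib)
    qed
    finally have le1: "cvar M \<alpha> (\<sigma> (indvec (B \<union> J))) \<le> ?E B + (\<Sum>j\<in>J. d j) + real (card J) * (c - ?E B)"
      by simp
    have cE: "c \<le> ?E B" unfolding c_def xbB by (rule cvar_le_exp[OF P intS a])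
    have "card J \<ge> 1" using False fJ by (simp add: Suc_le_eq card_gt_0_iff)
    then have "real (card J) * (c - ?E B) \<le> 1 * (c - ?E B)"
      using cE by (intro mult_right_mono_neg) auto
    then have "real (card J) * (c - ?E B) \<le> c - ?E B" by simp
    then show ?thesis using le1 c1 by linarith
  qed
  then show ?thesis unfolding sat_cut_def using sumeq by (simp add: cutA_def c_def)
qed

lemma cutB_sum:
  "(\<Sum>j\<in>UNIV. snd (cutB M \<sigma> \<alpha> xb js) $ j * x $ j) =
   (\<Sum>i<length js. (cvar M \<alpha> (\<sigma> (onesv - (\<Sum>l\<in>{Suc i..<length js}. unitv (js ! l)))) - cvar M \<alpha> (\<sigma> xb)) * x $ (js ! i))"
proof -
  define \<delta> where "\<delta> i = cvar M \<alpha> (\<sigma> (onesv - (\<Sum>l\<in>{Suc i..<length js}. unitv (js ! l)))) - cvar M \<alpha> (\<sigma> xb)" for i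
  have "(\<Sum>j\<in>UNIV. snd (cutB M \<sigma> \<alpha> xb js) $ j * x $ j) =
        (\<Sum>j\<in>UNIV. \<Sum>i<length js. (if js ! i = j then \<delta> i * x $ j else 0))"
    by (simp add: cutB_def \<delta>_def sum_distrib_right if_distrib[of "\<lambda>t. t * _"] cong: if_cong)
  also have "\<dots> = (\<Sum>i<length js. \<Sum>j\<in>UNIV. (if js ! i = j then \<delta> i * x $ j else 0))"
    by (rule sum.swap)
  also have "\<dots> = (\<Sum>i<length js. \<delta> i * x $ (js ! i))"
    by simp
  finally show ?thesis by (simp add: \<delta>_def)
qed

lemma cutB_valid:
  assumes xb: "xb \<in> binvecs" and x: "x \<in> binvecs" and js: "ordering_of js (UNIV - supp xb)"
  shows "sat_cut (cutB M \<sigma> \<alpha> xb js) x (cvar M \<alpha> (\<sigma> x))"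
proof -
  define B where "B = supp xb"
  define S where "S = supp x"
  define r where "r = length js"
  define c where "c = cvar M \<alpha> (\<sigma> xb)"
  define T where "T i = UNIV - (\<lambda>l. js ! l) ` {Suc i..<r}" for i
  define \<delta> where "\<delta> i = cvar M \<alpha> (\<sigma> (onesv - (\<Sum>l\<in>{Suc i..<length js}. unitv (js ! l)))) - c" for i
  have xbB: "xb = indvec B" unfolding B_def by (rule bin_indvec[OF xb])
  have xS: "x = indvec S" unfolding S_def by (rule bin_indvec[OF x])
  have dist: "distinct js" and setjs: "set js = UNIV - B" using js by (auto simp: ordering_of_def B_def)
  have \<delta>T: "\<delta> i = cvar M \<alpha> (\<sigma> (indvec (T i))) - c" for i
    unfolding \<delta>_def T_def r_def using ones_minus[OF dist, of "{Suc i..<length js}"] by (simp add: subset_eq)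
  have BT: "B \<subseteq> T i" for i
  proof
    fix b assume b: "b \<in> B"
    show "b \<in> T i"
    proof (rule ccontr)
      assume "b \<notin> T i"
      then obtain l where "l \<in> {Suc i..<r}" "b = js ! l" unfolding T_def by blast
      then have "b \<in> set js" by (simp add: r_def)
      then show False using setjs b by blast
    qed
  qed
  have \<delta>nn: "\<delta> i \<ge> 0" for i
  proof -
    have "cvar M \<alpha> (\<sigma> (indvec B)) \<le> cvar M \<alpha> (\<sigma> (indvec (T i)))" by (rule cmono[OF BT])
    then show ?thesis unfolding \<delta>T c_def xbB by linarith
  qed
  have xnn: "x $ k \<ge> 0" for k unfolding xS by simp
  have sumeq: "(\<Sum>j\<in>UNIV. snd (cutB M \<sigma> \<alpha> xb js) $ j * x $ j) = (\<Sum>i<r. \<delta> i * x $ (js ! i))"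
    unfolding cutB_sum by (simp add: \<delta>_def c_def r_def)
  have snn: "0 \<le> (\<Sum>i<r. \<delta> i * x $ (js ! i))"
  proof (rule sum_nonneg)
    fix i show "0 \<le> \<delta> i * x $ (js ! i)" using \<delta>nn[of i] xnn[of "js ! i"] by simp
  qed
  have "cvar M \<alpha> (\<sigma> x) \<le> c + (\<Sum>i<r. \<delta> i * x $ (js ! i))"
  proof (cases "\<exists>i<r. js ! i \<in> S")
    case False
    have "S \<subseteq> B"
    proof
      fix k assume k: "k \<in> S"
      show "k \<in> B"
      proof (rule ccontr)
        assume "k \<notin> B"
        then have "k \<in> set js" using setjs by simp
        then obtain i where "i < r" "js ! i = k" by (auto simp: in_set_conv_nth r_def)
        then show False using False k by auto
      qed
    qed
    then have "cvar M \<alpha> (\<sigma> x) \<le> c" unfolding xS c_def xbB by (rule cmono)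
    then show ?thesis using snn by linarith
  next
    case True
    define I where "I = {i. i < r \<and> js ! i \<in> S}"
    define i0 where "i0 = Max I"
    have fI: "finite I" by (auto simp: I_def)
    have I0: "I \<noteq> {}" using True by (auto simp: I_def)
    have i0I: "i0 \<in> I" unfolding i0_def using fI I0 by (rule Max_in)
    have "S \<subseteq> T i0"
    proof
      fix k assume k: "k \<in> S"
      show "k \<in> T i0"
      proof (rule ccontr)
        assume "k \<notin> T i0"
        then obtain l where l: "l \<in> {Suc i0..<r}" "k = js ! l" by (auto simp: T_def)
        then have "l \<in> I" using k by (auto simp: I_def)
        then have "l \<le> i0" unfolding i0_def using fI by simp
        then show False using l by auto
      qed
    qed
    then have h1: "cvar M \<alpha> (\<sigma> x) \<le> cvar M \<alpha> (\<sigma> (indvec (T i0)))" unfolding xS by (rule cmono)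
    have x1: "x $ (js ! i0) = 1" using i0I by (simp add: I_def xS)
    have h2: "cvar M \<alpha> (\<sigma> (indvec (T i0))) = c + \<delta> i0 * x $ (js ! i0)"
      unfolding x1 \<delta>T by simp
    have h3: "\<delta> i0 * x $ (js ! i0) \<le> (\<Sum>i<r. \<delta> i * x $ (js ! i))"
    proof (rule member_le_sum)
      show "i0 \<in> {..<r}" using i0I by (simp add: I_def)
      fix i assume "i \<in> {..<r} - {i0}"
      show "0 \<le> \<delta> i * x $ (js ! i)" using \<delta>nn[of i] xnn[of "js ! i"] by simp
    qed simp
    show ?thesis using h1 h2 h3 by linarith
  qed
  then show ?thesis unfolding sat_cut_def using sumeq by (simp add: cutB_def c_def)
qed

lemma cutA_zero:
  "fst (cutA M \<sigma> \<alpha> xb) + (\<Sum>j\<in>UNIV. snd (cutA M \<sigma> \<alpha> xb) $ j * xb $ j) = cvar M \<alpha> (\<sigma> xb)"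
  by (auto simp: cutA_def supp_def intro!: sum.neutral)

lemma cutB_zero:
  assumes js: "ordering_of js (UNIV - supp xb)"
  shows "fst (cutB M \<sigma> \<alpha> xb js) + (\<Sum>j\<in>UNIV. snd (cutB M \<sigma> \<alpha> xb js) $ j * xb $ j) = cvar M \<alpha> (\<sigma> xb)"
proof -
  have "xb $ (js ! i) = 0" if "i < length js" for i
  proof -
    have "js ! i \<in> set js" using that by simp
    then show ?thesis using js by (auto simp: ordering_of_def supp_def)
  qed
  then show ?thesis unfolding cutB_sum by (simp add: cutB_def)
qed

end


theorem proposition3:
  fixes M :: "'a measure" and \<sigma> :: "real^'n \<Rightarrow> 'a \<Rightarrow> real"
    and X :: "(real^'n) set" and \<alpha> :: real and C0 :: "'n cut set"
    and xs :: "nat \<Rightarrow> real^'n" and psis :: "nat \<Rightarrow> real" and Cs :: "nat \<Rightarrow> 'n cut set"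
  assumes "prob_space M"
    and "\<And>\<omega>. \<omega> \<in> space M \<Longrightarrow> nondecr_setfun (\<lambda>S. \<sigma> (indvec S) \<omega>)"
    and "\<And>\<omega>. \<omega> \<in> space M \<Longrightarrow> submodular_setfun (\<lambda>S. \<sigma> (indvec S) \<omega>)"
    and "\<And>x. x \<in> binvecs \<Longrightarrow> integrable M (\<sigma> x)"
    and "X \<subseteq> binvecs" and "X \<noteq> {}"
    and "0 < \<alpha>" and "\<alpha> \<le> 1"
    and "finite C0" and "\<forall>c\<in>C0. optimality_cut M \<sigma> \<alpha> X c"
    and "dcg_run M \<sigma> \<alpha> X C0 xs psis Cs"
  shows "\<exists>k. (\<forall>i<k. psis i - cvar M \<alpha> (\<sigma> (xs i)) > 0) \<and>
             psis k - cvar M \<alpha> (\<sigma> (xs k)) \<le> 0 \<and>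
             xs k \<in> X \<and> (\<forall>x\<in>X. cvar M \<alpha> (\<sigma> x) \<le> cvar M \<alpha> (\<sigma> (xs k)))"
proof -
  have cA: "\<And>xb x. xb \<in> binvecs \<Longrightarrow> x \<in> binvecs \<Longrightarrow> sat_cut (cutA M \<sigma> \<alpha> xb) x (cvar M \<alpha> (\<sigma> x))"
    by (rule cutA_valid) (rule assms(1), (rule assms(2), assumption), (rule assms(3), assumption), (rule assms(4), assumption), (rule assms(7)), rule assms(8))
  have cB: "\<And>xb x js. xb \<in> binvecs \<Longrightarrow> x \<in> binvecs \<Longrightarrow> ordering_of js (UNIV - supp xb) \<Longrightarrow>
      sat_cut (cutB M \<sigma> \<alpha> xb js) x (cvar M \<alpha> (\<sigma> x))"
    by (rule cutB_valid) (rule assms(1), (rule assms(2), assumption), (rule assms(3), assumption), (rule assms(4), assumption), (rule assms(7)), rule assms(8))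
  have zA: "\<And>xb. fst (cutA M \<sigma> \<alpha> xb) + (\<Sum>j\<in>UNIV. snd (cutA M \<sigma> \<alpha> xb) $ j * xb $ j) = cvar M \<alpha> (\<sigma> xb)"
    by (rule cutA_zero) (rule assms(1), (rule assms(2), assumption), (rule assms(3), assumption), (rule assms(4), assumption), (rule assms(7)), rule assms(8))
  have zB: "\<And>xb js. ordering_of js (UNIV - supp xb) \<Longrightarrow>
      fst (cutB M \<sigma> \<alpha> xb js) + (\<Sum>j\<in>UNIV. snd (cutB M \<sigma> \<alpha> xb js) $ j * xb $ j) = cvar M \<alpha> (\<sigma> xb)"
    by (rule cutB_zero) (rule assms(1), (rule assms(2), assumption), (rule assms(3), assumption), (rule assms(4), assumption), (rule assms(7)), rule assms(8))
  define gp where "gp i = psis i - cvar M \<alpha> (\<sigma> (xs i))" for i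
  have C0: "Cs 0 = C0" using assms(11) by (simp add: dcg_run_def)
  have step: "\<And>k. (\<forall>i<k. gp i > 0) \<Longrightarrow> master_opt X (Cs k) (xs k) (psis k) \<and>
        (Cs (Suc k) = Cs k \<union> {cutA M \<sigma> \<alpha> (xs k)} \<or>
         (\<exists>js. ordering_of js (UNIV - supp (xs k)) \<and>
            (Cs (Suc k) = Cs k \<union> {cutB M \<sigma> \<alpha> (xs k) js} \<or>
             Cs (Suc k) = Cs k \<union> {cutA M \<sigma> \<alpha> (xs k), cutB M \<sigma> \<alpha> (xs k) js})))"
    using assms(11) unfolding dcg_run_def gp_def by blast
  have valid: "(\<forall>i<k. gp i > 0) \<longrightarrow> (\<forall>c\<in>Cs k. \<forall>x\<in>X. sat_cut c x (cvar M \<alpha> (\<sigma> x)))" for k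
  proof (induction k)
    case 0
    then show ?case using C0 assms(10) by (simp add: optimality_cut_def)
  next
    case (Suc k)
    show ?case
    proof (intro impI)
      assume g: "\<forall>i<Suc k. gp i > 0"
      then have gk: "\<forall>i<k. gp i > 0" by simp
      with Suc.IH have IH: "\<forall>c\<in>Cs k. \<forall>x\<in>X. sat_cut c x (cvar M \<alpha> (\<sigma> x))" by blast
      from step[OF gk] have mo: "master_opt X (Cs k) (xs k) (psis k)" by blast
      then have xk: "xs k \<in> binvecs" using assms(5) by (auto simp: master_opt_def)
      have vA: "\<forall>x\<in>X. sat_cut (cutA M \<sigma> \<alpha> (xs k)) x (cvar M \<alpha> (\<sigma> x))"
        using cA[OF xk] assms(5) by blast
      have vB: "\<forall>x\<in>X. sat_cut (cutB M \<sigma> \<alpha> (xs k) js) x (cvar M \<alpha> (\<sigma> x))"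
        if "ordering_of js (UNIV - supp (xs k))" for js
        using cB[OF xk _ that] assms(5) by blast
      from step[OF gk] IH vA vB show "\<forall>c\<in>Cs (Suc k). \<forall>x\<in>X. sat_cut c x (cvar M \<alpha> (\<sigma> x))"
        by auto
    qed
  qed
  define Z where "Z c xb \<longleftrightarrow> fst c + (\<Sum>j\<in>UNIV. snd c $ j * xb $ j) \<le> cvar M \<alpha> (\<sigma> xb)" for c xb
  have grow: "(\<forall>i<k. gp i > 0) \<longrightarrow> (\<forall>i<k. \<exists>c\<in>Cs k. Z c (xs i))" for k
  proof (induction k)
    case 0
    then show ?case by simp
  next
    case (Suc k)
    show ?case
    proof (intro impI allI)
      fix i assume g: "\<forall>i<Suc k. gp i > 0" and i: "i < Suc k"
      then have gk: "\<forall>i<k. gp i > 0" by simp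
      with Suc.IH have IH: "\<forall>i<k. \<exists>c\<in>Cs k. Z c (xs i)" by blast
      have sub: "Cs k \<subseteq> Cs (Suc k)" using step[OF gk] by blast
      show "\<exists>c\<in>Cs (Suc k). Z c (xs i)"
      proof (cases "i < k")
        case True
        then show ?thesis using IH sub by blast
      next
        case False
        then have ik: "i = k" using i by simp
        have zA': "Z (cutA M \<sigma> \<alpha> (xs k)) (xs k)" using zA by (simp add: Z_def)
        have zB': "Z (cutB M \<sigma> \<alpha> (xs k) js) (xs k)" if "ordering_of js (UNIV - supp (xs k))" for js
          using zB[OF that] by (simp add: Z_def)
        show ?thesis unfolding ik using step[OF gk] zA' zB' by blast
      qed
    qed
  qed
  have ex: "\<exists>k. \<not> gp k > 0"
  proof (rule ccontr)
    assume "\<not> (\<exists>k. \<not> gp k > 0)"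
    then have allp: "\<forall>k. gp k > 0" by simp
    have "range xs \<subseteq> X"
    proof
      fix y assume "y \<in> range xs"
      then obtain k where "y = xs k" by blast
      moreover have "master_opt X (Cs k) (xs k) (psis k)" using step allp by blast
      ultimately show "y \<in> X" by (simp add: master_opt_def)
    qed
    then have "range xs \<subseteq> binvecs" using assms(5) by (rule order_trans)
    then have fr: "finite (range xs)" by (rule finite_subset[OF _ finite_binvecs])
    have "\<not> inj xs"
    proof
      assume "inj xs"
      then have "finite (UNIV :: nat set)" by (rule finite_imageD[OF fr])
      then show False by simp
    qed
    then obtain i k where ik: "i \<noteq> k" "xs i = xs k" unfolding inj_def by blast
    have "\<exists>I K. I < K \<and> xs I = xs K"
    proof (cases "i < k")
      case True then show ?thesis using ik by blast
    next
      case False then have "k < i" using ik by simp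
      then show ?thesis using ik by metis
    qed
    then obtain I K where IK: "I < K" "xs I = xs K" by blast
    obtain c where c: "c \<in> Cs K" "Z c (xs I)" using grow[of K] allp IK by blast
    have "master_opt X (Cs K) (xs K) (psis K)" using step allp by blast
    then have "sat_cut c (xs K) (psis K)" using c by (simp add: master_opt_def)
    then have "psis K \<le> cvar M \<alpha> (\<sigma> (xs K))" using c IK by (simp add: sat_cut_def Z_def)
    then show False using allp[rule_format, of K] by (simp add: gp_def)
  qed
  define k where "k = (LEAST k. \<not> gp k > 0)"
  have gk: "\<not> gp k > 0" unfolding k_def by (rule LeastI_ex[OF ex])
  have gi: "\<forall>i<k. gp i > 0" unfolding k_def using not_less_Least by blast
  have mo: "master_opt X (Cs k) (xs k) (psis k)" using step[OF gi] by blast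
  have opt: "\<forall>x\<in>X. cvar M \<alpha> (\<sigma> x) \<le> cvar M \<alpha> (\<sigma> (xs k))"
  proof
    fix x assume x: "x \<in> X"
    have "\<forall>c\<in>Cs k. sat_cut c x (cvar M \<alpha> (\<sigma> x))" using valid[of k] gi x by blast
    then have "cvar M \<alpha> (\<sigma> x) \<le> psis k" using mo x by (simp add: master_opt_def)
    then show "cvar M \<alpha> (\<sigma> x) \<le> cvar M \<alpha> (\<sigma> (xs k))" using gk by (simp add: gp_def)
  qed
  show ?thesis
    using gi gk mo opt by (intro exI[of _ k]) (auto simp: gp_def master_opt_def)
qed

end
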